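(* Let $X$ be a topological space admitting a metrizable compactification $\tilde X$, and let $T\colon X\to X$ be continuous. If $d$ and $c$ are the restrictions to $X$ of metrics $\tilde d$ and $\tilde c$ on $\tilde X$ compatible with its topology, then $h^d(T)=h^c(T)$.
   Context: For a metric $d$ on $X$: $d_n(x,y)=\max_{0\le j<n}d(T^jx,T^jy)$, $\mathcal B_{d_n}(\varepsilon)$ is the family of open $d_n$-balls of radius $\varepsilon$ centered at points of $X$, $N(\mathcal A)$ denotes the least cardinality of a subcover of a cover $\mathcal A$, and the $d$-entropy is $h^d(T)=\sup_{\varepsilon>0}\lim_n\frac1n\log N(\mathcal B_{d_n}(\varepsilon))$. *)

theory Defs
  imports "HOL-Analysis.Analysis"
begin

definition dyn_metric :: "('a \<Rightarrow> 'a \<Rightarrow> real) \<Rightarrow> ('a \<Rightarrow> 'a) \<Rightarrow> nat \<Rightarrow> 'a \<Rightarrow> 'a \<Rightarrow> real" where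
  "dyn_metric d T n x y = (MAX j\<in>{..<n}. d ((T ^^ j) x) ((T ^^ j) y))"

definition dyn_balls :: "'a set \<Rightarrow> ('a \<Rightarrow> 'a \<Rightarrow> real) \<Rightarrow> ('a \<Rightarrow> 'a) \<Rightarrow> nat \<Rightarrow> real \<Rightarrow> 'a set set" where
  "dyn_balls X d T n eps = {{y \<in> X. dyn_metric d T n x y < eps} | x. x \<in> X}"

definition min_subcover_card :: "'a set \<Rightarrow> 'a set set \<Rightarrow> nat" where
  "min_subcover_card X A = Inf {card F | F. F \<subseteq> A \<and> finite F \<and> X \<subseteq> \<Union>F}"

definition d_entropy :: "'a set \<Rightarrow> ('a \<Rightarrow> 'a \<Rightarrow> real) \<Rightarrow> ('a \<Rightarrow> 'a) \<Rightarrow> ereal" where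
  "d_entropy X d T = (SUP eps\<in>{0<..}.
     limsup (\<lambda>n. ereal (ln (real (min_subcover_card X (dyn_balls X d T n eps))) / real n)))"

end

theory Submission
  imports Defs
begin

lemma unif_equiv:
  assumes "compact_space K"
    and "Metric_space (topspace K) d" and "Metric_space.mtopology (topspace K) d = K"
    and "Metric_space (topspace K) c" and "Metric_space.mtopology (topspace K) c = K"
    and "e > 0"
  shows "\<exists>\<delta>>0. \<forall>x\<in>topspace K. \<forall>y\<in>topspace K. d x y < \<delta> \<longrightarrow> c x y < e"
proof -
  let ?m1 = "metric (topspace K, d)" and ?m2 = "metric (topspace K, c)"
  have t1: "mtopology_of ?m1 = K" using assms(2,3) Metric_space.mtopology_of by metis
  have t2: "mtopology_of ?m2 = K" using assms(4,5) Metric_space.mtopology_of by metis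
  have "uniformly_continuous_map ?m1 ?m2 id"
    using continuous_imp_uniformly_continuous_map[of ?m1 ?m2 id] t1 t2 assms(1) by simp
  then obtain \<delta> where "\<delta> > 0" and h: "\<forall>x \<in> mspace ?m1. \<forall>y \<in> mspace ?m1.
      mdist ?m1 y x < \<delta> \<longrightarrow> mdist ?m2 (id y) (id x) < e"
    unfolding uniformly_continuous_map_def using assms(6) by blast
  have "mspace ?m1 = topspace K" "mdist ?m1 = d" "mdist ?m2 = c"
    using assms(2,4) Metric_space.mspace_metric Metric_space.mdist_metric by metis+
  then show ?thesis using h \<open>\<delta> > 0\<close> by (metis id_apply)
qed

lemma dyn_lt:
  assumes "n > 0"
  shows "dyn_metric d T n x y < e \<longleftrightarrow> (\<forall>j<n. d ((T ^^ j) x) ((T ^^ j) y) < e)"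
  using assms unfolding dyn_metric_def by (subst Max_less_iff) auto

lemma funpow_in:
  assumes "T ` X \<subseteq> X" "x \<in> X"
  shows "(T ^^ j) x \<in> X"
  using assms by (induction j) auto

lemma finite_cover:
  assumes "Metric_space M d" "Metric_space.mtotally_bounded M d M" "X \<subseteq> M" "T ` X \<subseteq> X"
    "e > 0" "n > 0"
  shows "\<exists>F. F \<subseteq> dyn_balls X d T n e \<and> finite F \<and> X \<subseteq> \<Union>F"
proof -
  interpret Metric_space M d by fact
  have "e/2 > 0" using \<open>e > 0\<close> by simp
  have H: "\<forall>\<epsilon>>0. \<exists>K. finite K \<and> K \<subseteq> M \<and> M \<subseteq> (\<Union>x\<in>K. mball x \<epsilon>)"
    using assms(2) unfolding mtotally_bounded_def .
  from H[rule_format, OF \<open>e/2 > 0\<close>] obtain C where C: "finite C" "C \<subseteq> M" "M \<subseteq> (\<Union>x\<in>C. mball x (e/2))"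
    by (elim exE conjE)
  define cell where "cell g = {x\<in>X. \<forall>j<n. d ((T ^^ j) x) (g j) < e/2}" for g
  define G where "G = {g \<in> {..<n} \<rightarrow>\<^sub>E C. cell g \<noteq> {}}"
  define bl where "bl z = {y\<in>X. dyn_metric d T n z y < e}" for z
  define F where "F = (\<lambda>g. bl (SOME x. x \<in> cell g)) ` G"
  have "G \<subseteq> {..<n} \<rightarrow>\<^sub>E C" unfolding G_def by blast
  hence "finite G" using C(1) by (meson finite_PiE finite_lessThan finite_subset)
  hence "finite F" unfolding F_def by simp
  moreover have "F \<subseteq> dyn_balls X d T n e"
  proof
    fix B assume "B \<in> F"
    then obtain g where g: "g \<in> G" "B = bl (SOME x. x \<in> cell g)" unfolding F_def by auto
    hence "cell g \<noteq> {}" unfolding G_def by blast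
    hence "(SOME x. x \<in> cell g) \<in> cell g" by (simp add: some_in_eq)
    hence "(SOME x. x \<in> cell g) \<in> X" unfolding cell_def by blast
    thus "B \<in> dyn_balls X d T n e" unfolding g(2) dyn_balls_def bl_def by blast
  qed
  moreover have "X \<subseteq> \<Union>F"
  proof
    fix x assume x: "x \<in> X"
    have ex: "\<exists>c\<in>C. d c ((T ^^ j) x) < e/2" for j
    proof -
      have "(T ^^ j) x \<in> M" using funpow_in[OF assms(4) x] assms(3) by auto
      then obtain c where "c \<in> C" "(T ^^ j) x \<in> mball c (e/2)" using C(3) by blast
      thus ?thesis by auto
    qed
    define g where "g = (\<lambda>j. if j < n then (SOME c. c\<in>C \<and> d c ((T ^^ j) x) < e/2) else undefined)"
    have gj: "j < n \<Longrightarrow> g j \<in> C \<and> d (g j) ((T ^^ j) x) < e/2" for j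
      unfolding g_def using someI_ex[OF ex[of j, unfolded Bex_def]] by auto
    have xc: "x \<in> cell g"
    proof -
      have "d ((T ^^ j) x) (g j) < e/2" if j: "j < n" for j
      proof -
        have "g j \<in> M" using gj[OF j] C(2) by blast
        moreover have "(T ^^ j) x \<in> M" using funpow_in[OF assms(4) x] assms(3) by blast
        ultimately show ?thesis using commute gj[OF j] by metis
      qed
      thus ?thesis unfolding cell_def using x by blast
    qed
    have "g \<in> {..<n} \<rightarrow>\<^sub>E C"
    proof (rule PiE_I)
      fix j assume "j \<in> {..<n}" thus "g j \<in> C" using gj by blast
    next
      fix j assume "j \<notin> {..<n}" thus "g j = undefined" unfolding g_def by simp
    qed
    hence "g \<in> G" unfolding G_def using xc by blast
    define z where "z = (SOME x. x \<in> cell g)"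
    have z: "z \<in> cell g" unfolding z_def using xc by (rule someI)
    have "dyn_metric d T n z x < e"
      unfolding dyn_lt[OF assms(6)]
    proof (intro allI impI)
      fix j assume j: "j < n"
      have zX: "z \<in> X" using z unfolding cell_def by auto
      have m1: "(T ^^ j) z \<in> M" "(T ^^ j) x \<in> M"
        using funpow_in[OF assms(4) zX] funpow_in[OF assms(4) x] assms(3) by auto
      have "g j \<in> M" using gj[OF j] C(2) by auto
      have "d ((T ^^ j) z) ((T ^^ j) x) \<le> d ((T ^^ j) z) (g j) + d (g j) ((T ^^ j) x)"
        using triangle m1 \<open>g j \<in> M\<close> by blast
      also have "\<dots> < e/2 + e/2" using z j gj[OF j] unfolding cell_def
        by (intro add_strict_mono) auto
      finally show "d ((T ^^ j) z) ((T ^^ j) x) < e" by simp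
    qed
    hence "x \<in> bl z" unfolding bl_def using x by auto
    moreover have "bl z \<in> F" unfolding F_def z_def using \<open>g \<in> G\<close> by auto
    ultimately show "x \<in> \<Union>F" by auto
  qed
  ultimately show ?thesis by blast
qed

lemma N_le:
  assumes "X \<subseteq> M" "T ` X \<subseteq> X" "n > 0"
    and h: "\<forall>x\<in>M. \<forall>y\<in>M. d x y < \<delta> \<longrightarrow> c x y < e"
    and cov: "\<exists>F. F \<subseteq> dyn_balls X d T n \<delta> \<and> finite F \<and> X \<subseteq> \<Union>F"
  shows "min_subcover_card X (dyn_balls X c T n e) \<le> min_subcover_card X (dyn_balls X d T n \<delta>)"
proof -
  let ?S = "{card F | F. F \<subseteq> dyn_balls X d T n \<delta> \<and> finite F \<and> X \<subseteq> \<Union>F}"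
  have "?S \<noteq> {}" using cov by blast
  hence "Inf ?S \<in> ?S" by (rule Inf_nat_def1)
  hence "\<exists>F. Inf ?S = card F \<and> F \<subseteq> dyn_balls X d T n \<delta> \<and> finite F \<and> X \<subseteq> \<Union>F"
    by (simp only: mem_Collect_eq)
  then obtain F where F: "F \<subseteq> dyn_balls X d T n \<delta>" "finite F" "X \<subseteq> \<Union>F"
    "card F = Inf ?S" by (elim exE conjE) (rule that, assumption+, rule sym)
  have F4: "card F = min_subcover_card X (dyn_balls X d T n \<delta>)"
    unfolding min_subcover_card_def by (rule F(4))
  define cen where "cen B = (SOME x. x \<in> X \<and> B = {y \<in> X. dyn_metric d T n x y < \<delta>})" for B
  have cen: "B \<in> F \<Longrightarrow> cen B \<in> X \<and> B = {y \<in> X. dyn_metric d T n (cen B) y < \<delta>}" for B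
  proof -
    assume "B \<in> F"
    hence "\<exists>x. x \<in> X \<and> B = {y \<in> X. dyn_metric d T n x y < \<delta>}"
      using F(1) unfolding dyn_balls_def by blast
    thus ?thesis unfolding cen_def by (rule someI_ex)
  qed
  define G where "G = (\<lambda>B. {y \<in> X. dyn_metric c T n (cen B) y < e}) ` F"
  have "G \<subseteq> dyn_balls X c T n e" unfolding G_def dyn_balls_def using cen by auto
  moreover have "finite G" unfolding G_def using F(2) by simp
  moreover have "X \<subseteq> \<Union>G"
  proof
    fix y assume y: "y \<in> X"
    then obtain B where B: "B \<in> F" "y \<in> B" using F(3) by auto
    have "B = {y \<in> X. dyn_metric d T n (cen B) y < \<delta>}" using cen[OF B(1)] by (rule conjunct2)
    hence "y \<in> {y \<in> X. dyn_metric d T n (cen B) y < \<delta>}" using B(2) by (simp only:)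
    hence "dyn_metric d T n (cen B) y < \<delta>" by (simp only: mem_Collect_eq)
    hence "\<forall>j<n. d ((T ^^ j) (cen B)) ((T ^^ j) y) < \<delta>" unfolding dyn_lt[OF assms(3)] .
    hence "\<forall>j<n. c ((T ^^ j) (cen B)) ((T ^^ j) y) < e"
    proof (intro allI impI)
      fix j assume dj: "\<forall>j<n. d ((T ^^ j) (cen B)) ((T ^^ j) y) < \<delta>" and j: "j < n"
      have cB: "cen B \<in> X" using cen[OF B(1)] by blast
      have m: "(T ^^ j) (cen B) \<in> M" "(T ^^ j) y \<in> M"
        using funpow_in[OF assms(2) cB] funpow_in[OF assms(2) y] assms(1) by blast+
      show "c ((T ^^ j) (cen B)) ((T ^^ j) y) < e" using h m dj j by blast
    qed
    hence "dyn_metric c T n (cen B) y < e" unfolding dyn_lt[OF assms(3)] .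
    thus "y \<in> \<Union>G" unfolding G_def using B y by auto
  qed
  ultimately have "card G \<in> {card F | F. F \<subseteq> dyn_balls X c T n e \<and> finite F \<and> X \<subseteq> \<Union>F}"
    by (intro CollectI exI[of _ G] conjI refl)
  hence "min_subcover_card X (dyn_balls X c T n e) \<le> card G"
    unfolding min_subcover_card_def by (rule cInf_lower) simp
  also have "\<dots> \<le> card F" unfolding G_def by (rule card_image_le[OF F(2)])
  finally show ?thesis using F4 by simp
qed

lemma ln_div_mono:
  assumes "(a::nat) \<le> b"
  shows "ln (real a) / real n \<le> ln (real b) / real n"
proof (cases "a = 0")
  case True
  then show ?thesis by (cases "b = 0") (auto intro!: divide_nonneg_nonneg)
next
  case False
  then show ?thesis using assms by (intro divide_right_mono) auto
qed

lemma one_dir: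
  assumes "compact_space K"
    and "X \<subseteq> topspace K"
    and "Metric_space (topspace K) dt"
    and "Metric_space.mtopology (topspace K) dt = K"
    and "Metric_space (topspace K) ct"
    and "Metric_space.mtopology (topspace K) ct = K"
    and "T ` X \<subseteq> X"
  shows "d_entropy X ct T \<le> d_entropy X dt T"
  unfolding d_entropy_def
proof (rule SUP_least)
  fix e :: real assume "e \<in> {0<..}"
  hence e: "e > 0" by simp
  obtain \<delta> where \<delta>: "\<delta> > 0" "\<forall>x\<in>topspace K. \<forall>y\<in>topspace K. dt x y < \<delta> \<longrightarrow> ct x y < e"
    using unif_equiv[OF assms(1,3,4,5,6) e] by blast
  have tb: "Metric_space.mtotally_bounded (topspace K) dt (topspace K)"
    using assms(1,3,4) Metric_space.compact_space_eq_mcomplete_mtotally_bounded by metis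
  have "ln (real (min_subcover_card X (dyn_balls X ct T n e))) / real n
      \<le> ln (real (min_subcover_card X (dyn_balls X dt T n \<delta>))) / real n" for n
  proof (cases "n = 0")
    case True thus ?thesis by simp
  next
    case False
    show ?thesis
      by (rule ln_div_mono, rule N_le[OF assms(2,7)]) (use False \<delta> finite_cover[OF assms(3) tb assms(2,7) \<delta>(1)] in auto)
  qed
  hence "limsup (\<lambda>n. ereal (ln (real (min_subcover_card X (dyn_balls X ct T n e))) / real n))
     \<le> limsup (\<lambda>n. ereal (ln (real (min_subcover_card X (dyn_balls X dt T n \<delta>))) / real n))"
    by (intro Limsup_mono) auto
  also have "\<dots> \<le> (SUP eps\<in>{0<..}.
     limsup (\<lambda>n. ereal (ln (real (min_subcover_card X (dyn_balls X dt T n eps))) / real n)))"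
    using \<delta>(1) by (intro SUP_upper) auto
  finally show "limsup (\<lambda>n. ereal (ln (real (min_subcover_card X (dyn_balls X ct T n e))) / real n))
     \<le> (SUP eps\<in>{0<..}.
     limsup (\<lambda>n. ereal (ln (real (min_subcover_card X (dyn_balls X dt T n eps))) / real n)))" .
qed

theorem corollary2p29:
  fixes K :: "'a topology" and X :: "'a set" and T :: "'a \<Rightarrow> 'a"
    and dt ct :: "'a \<Rightarrow> 'a \<Rightarrow> real"
  assumes "compact_space K"
    and "X \<subseteq> topspace K"
    and "K closure_of X = topspace K"
    and "Metric_space (topspace K) dt"
    and "Metric_space.mtopology (topspace K) dt = K"
    and "Metric_space (topspace K) ct"
    and "Metric_space.mtopology (topspace K) ct = K"
    and "continuous_map (subtopology K X) (subtopology K X) T"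
  shows "d_entropy X dt T = d_entropy X ct T"
proof -
  have TX: "T ` X \<subseteq> X" using assms(8) continuous_map_image_subset_topspace assms(2)
    by (metis topspace_subtopology_subset)
  show ?thesis
    using one_dir[OF assms(1,2,4,5,6,7) TX] one_dir[OF assms(1,2,6,7,4,5) TX] by (rule antisym[rotated])
qed

end
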